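(* Let $(\Omega,\mathcal A',\mathbb Q)$ be a probability space carrying a real random variable $Y$, and let $\mathcal A\subseteq\mathcal A'$ be a sub-$\sigma$-field. Let $F$ be a CDF-valued random quantity that is ideal relative to $\mathcal A$, i.e. $F$ is a regular version of the conditional distribution of $Y$ given $\mathcal A$. Let $\alpha\in(0,1)$, let $Q$ be an $\mathcal A$-measurable random variable such that $Q(\omega)$ is an $\alpha$-quantile of $F(\omega)$ for almost every $\omega$, and let $X_1,X_2$ be $\mathcal A$-measurable real random variables such that almost surely either $X_2\le X_1\le Q$ or $Q\le X_1\le X_2$. Then $X_1$ dominates $X_2$ as an $\alpha$-quantile forecast: $\mathbb E_{\mathbb Q}\,\mathrm S(X_1,Y)\le\mathbb E_{\mathbb Q}\,\mathrm S(X_2,Y)$ for every $\mathrm S\in\mathcal S^{\rm Q}_\alpha$. Analogously, if $\mathbb E_{\mathbb Q}|Y|<\infty$, $T$ is the ($\mathcal A$-measurable) $\alpha$-expectile of $F$, and almost surely either $X_2\le X_1\le T$ or $T\le X_1\le X_2$, then $\mathbb E_{\mathbb Q}\,\mathrm S(X_1,Y)\le\mathbb E_{\mathbb Q}\,\mathrm S(X_2,Y)$ for every $\mathrm S\in\mathcal S^{\rm E}_\alpha$.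
   Context: For a CDF $G$, its $\alpha$-quantiles are the points of $[\sup\{s:G(s)<\alpha\},\sup\{s:G(s)\le\alpha\}]$; for $G$ with finite first moment, its $\alpha$-expectile is the unique $t$ with $(1-\alpha)\int_{-\infty}^t(t-y)\,\mathrm dG(y)=\alpha\int_t^\infty(y-t)\,\mathrm dG(y)$. $\mathcal S^{\rm Q}_\alpha$ is the class of scoring functions $\mathrm S(x,y)=(\mathbb 1(y<x)-\alpha)(g(x)-g(y))$ with $g:\mathbb R\to\mathbb R$ left-continuous non-decreasing; $\mathcal S^{\rm E}_\alpha$ is the class of scoring functions $\mathrm S(x,y)=|\mathbb 1(y<x)-\alpha|\,(\phi(y)-\phi(x)-\phi'(x)(y-x))$ with $\phi$ convex and $\phi'$ its left-hand derivative. Expectations of these nonnegative functions take values in $[0,\infty]$. *)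

theory Defs
  imports "HOL-Probability.Probability"
begin

definition is_CDF :: "(real \<Rightarrow> real) \<Rightarrow> bool" where
  "is_CDF G \<longleftrightarrow> mono G \<and> (\<forall>x. continuous (at_right x) G)
     \<and> (G \<longlongrightarrow> 0) at_bot \<and> (G \<longlongrightarrow> 1) at_top"

abbreviation cdf_measure :: "(real \<Rightarrow> real) \<Rightarrow> real measure" where
  "cdf_measure G \<equiv> interval_measure G"

definition is_quantile :: "real \<Rightarrow> (real \<Rightarrow> real) \<Rightarrow> real \<Rightarrow> bool" where
  "is_quantile \<alpha> G q \<longleftrightarrow> Sup {s. G s < \<alpha>} \<le> q \<and> q \<le> Sup {s. G s \<le> \<alpha>}"

definition is_expectile :: "real \<Rightarrow> (real \<Rightarrow> real) \<Rightarrow> real \<Rightarrow> bool" where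
  "is_expectile \<alpha> G t \<longleftrightarrow> integrable (cdf_measure G) (\<lambda>y. y) \<and>
     (1 - \<alpha>) * (LINT y:{..t}|cdf_measure G. t - y) = \<alpha> * (LINT y:{t<..}|cdf_measure G. y - t)"

text \<open>F is a regular version of the conditional distribution of Y given the sub-sigma-field A.\<close>
definition ideal_forecast :: "'a measure \<Rightarrow> 'a measure \<Rightarrow> ('a \<Rightarrow> real) \<Rightarrow> ('a \<Rightarrow> real \<Rightarrow> real) \<Rightarrow> bool" where
  "ideal_forecast M A Y F \<longleftrightarrow>
     (\<forall>\<omega>\<in>space M. is_CDF (F \<omega>)) \<and>
     (\<forall>t. (\<lambda>\<omega>. F \<omega> t) \<in> borel_measurable A) \<and>
     (\<forall>B\<in>sets A. \<forall>t. measure M (B \<inter> {\<omega>\<in>space M. Y \<omega> \<le> t}) = (LINT \<omega>:B|M. F \<omega> t))"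

definition scoresQ :: "real \<Rightarrow> (real \<Rightarrow> real \<Rightarrow> real) \<Rightarrow> bool" where
  "scoresQ \<alpha> S \<longleftrightarrow> (\<exists>g::real \<Rightarrow> real. mono g \<and> (\<forall>x. continuous (at_left x) g) \<and>
     S = (\<lambda>x y. ((if y < x then 1 else 0) - \<alpha>) * (g x - g y)))"

definition left_deriv :: "(real \<Rightarrow> real) \<Rightarrow> real \<Rightarrow> real" where
  "left_deriv \<phi> x = Lim (at_left x) (\<lambda>z. (\<phi> z - \<phi> x) / (z - x))"

definition scoresE :: "real \<Rightarrow> (real \<Rightarrow> real \<Rightarrow> real) \<Rightarrow> bool" where
  "scoresE \<alpha> S \<longleftrightarrow> (\<exists>\<phi>::real \<Rightarrow> real. convex_on UNIV \<phi> \<and>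
     S = (\<lambda>x y. \<bar>(if y < x then 1 else 0) - \<alpha>\<bar> * (\<phi> y - \<phi> x - left_deriv \<phi> x * (y - x))))"

end

theory Submission
  imports Defs
begin


lemma cancel_lemma:
  fixes M :: "real measure" and fa fb ha hb :: "real \<Rightarrow> real"
  assumes M: "finite_measure M"
    and m: "fa \<in> borel_measurable M" "fb \<in> borel_measurable M"
    and nn: "\<And>y. 0 \<le> fa y" "\<And>y. 0 \<le> fb y" "\<And>y. 0 \<le> ha y" "\<And>y. 0 \<le> hb y"
    and i: "integrable M ha" "integrable M hb"
    and le_int: "integral\<^sup>L M hb \<le> integral\<^sup>L M ha"
    and pt: "\<And>y. y \<in> space M \<Longrightarrow> fa y + ha y \<le> fb y + hb y"
  shows "(\<integral>\<^sup>+y. ennreal (fa y) \<partial>M) \<le> (\<integral>\<^sup>+y. ennreal (fb y) \<partial>M)"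
proof -
  have hm: "ha \<in> borel_measurable M" "hb \<in> borel_measurable M" using i by auto
  have e1: "(\<integral>\<^sup>+y. ennreal (ha y) \<partial>M) = ennreal (integral\<^sup>L M ha)"
    using i nn by (intro nn_integral_eq_integral) auto
  have e2: "(\<integral>\<^sup>+y. ennreal (hb y) \<partial>M) = ennreal (integral\<^sup>L M hb)"
    using i nn by (intro nn_integral_eq_integral) auto
  have "(\<integral>\<^sup>+y. ennreal (fa y) \<partial>M) + ennreal (integral\<^sup>L M ha)
      = (\<integral>\<^sup>+y. ennreal (fa y) + ennreal (ha y) \<partial>M)"
    using m hm by (subst nn_integral_add) (auto simp: e1)
  also have "\<dots> = (\<integral>\<^sup>+y. ennreal (fa y + ha y) \<partial>M)"
    using nn by (intro nn_integral_cong) (simp add: ennreal_plus)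
  also have "\<dots> \<le> (\<integral>\<^sup>+y. ennreal (fb y + hb y) \<partial>M)"
    using pt by (intro nn_integral_mono ennreal_leI) auto
  also have "\<dots> = (\<integral>\<^sup>+y. ennreal (fb y) + ennreal (hb y) \<partial>M)"
    using nn by (intro nn_integral_cong) (simp add: ennreal_plus)
  also have "\<dots> = (\<integral>\<^sup>+y. ennreal (fb y) \<partial>M) + ennreal (integral\<^sup>L M hb)"
    using m hm by (subst nn_integral_add) (auto simp: e2)
  also have "\<dots> \<le> (\<integral>\<^sup>+y. ennreal (fb y) \<partial>M) + ennreal (integral\<^sup>L M ha)"
    using le_int by (intro add_left_mono ennreal_leI)
  finally have "ennreal (integral\<^sup>L M ha) + (\<integral>\<^sup>+y. ennreal (fa y) \<partial>M)
     \<le> ennreal (integral\<^sup>L M ha) + (\<integral>\<^sup>+y. ennreal (fb y) \<partial>M)"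
    by (simp add: add.commute)
  then show ?thesis
    unfolding ennreal_add_left_cancel_le by simp
qed

lemma CDF_facts:
  assumes G: "is_CDF G"
  shows "prob_space (interval_measure G)" "sets (interval_measure G) = sets borel"
    "\<And>x. measure (interval_measure G) {..x} = G x"
    "\<And>x. emeasure (interval_measure G) {..x} = G x"
proof -
  have nd: "\<And>x y. x \<le> y \<Longrightarrow> G x \<le> G y" and rc: "\<And>a. continuous (at_right a) G"
    and b: "(G \<longlongrightarrow> 0) at_bot" and t: "(G \<longlongrightarrow> 1) at_top"
    using G unfolding is_CDF_def mono_def by auto
  interpret real_distribution "interval_measure G"
    using real_distribution_interval_measure[OF nd rc b t] .
  show "prob_space (interval_measure G)" by unfold_locales
  show "sets (interval_measure G) = sets borel" by simp
  show "\<And>x. measure (interval_measure G) {..x} = G x"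
    using measure_interval_measure_Iic[OF nd rc b] .
  show "\<And>x. emeasure (interval_measure G) {..x} = G x"
    using emeasure_interval_measure_Iic[OF nd rc b] .
qed

lemma quantile_facts:
  assumes G: "is_CDF G" and a: "0 < \<alpha>" "\<alpha> < 1" and q: "is_quantile \<alpha> G q"
  shows "x \<le> q \<Longrightarrow> measure (interval_measure G) {..<x} \<le> \<alpha>"
    and "q \<le> x \<Longrightarrow> measure (interval_measure G) {x<..} \<le> 1 - \<alpha>"
proof -
  have nd: "\<And>x y. x \<le> y \<Longrightarrow> G x \<le> G y" and rc: "\<And>a. continuous (at_right a) G"
    and b: "(G \<longlongrightarrow> 0) at_bot" and t: "(G \<longlongrightarrow> 1) at_top"
    using G unfolding is_CDF_def mono_def by auto
  note CF = CDF_facts[OF G]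
  interpret prob_space "interval_measure G" by (rule CF(1))
  obtain s0 where s0: "G s0 < \<alpha>"
    using order_tendstoD(2)[OF b a(1)] by (auto simp: eventually_at_bot_linorder)
  obtain b0 where b0: "\<And>s. s \<ge> b0 \<Longrightarrow> G s > \<alpha>"
    using order_tendstoD(1)[OF t a(2)] by (auto simp: eventually_at_top_linorder)
  have bdd1: "bdd_above {s. G s \<le> \<alpha>}"
  proof (rule bdd_aboveI[of _ b0])
    fix x assume "x \<in> {s. G s \<le> \<alpha>}"
    then show "x \<le> b0" using b0[of x] by force
  qed
  have bdd2: "bdd_above {s. G s < \<alpha>}"
  proof (rule bdd_aboveI[of _ b0])
    fix x assume "x \<in> {s. G s < \<alpha>}"
    then show "x \<le> b0" using b0[of x] by force
  qed
  {
    assume "x \<le> q"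
    have Gle: "G s \<le> \<alpha>" if "s < x" for s
    proof -
      have "s < Sup {s. G s \<le> \<alpha>}" using q that \<open>x \<le> q\<close> unfolding is_quantile_def by linarith
      moreover have "{s. G s \<le> \<alpha>} \<noteq> {}" using s0 by (auto intro!: exI[of _ s0])
      ultimately obtain t where "t \<in> {s. G s \<le> \<alpha>}" "s < t"
        using less_cSup_iff[OF _ bdd1] by blast
      then show ?thesis using nd[of s t] by auto
    qed
    let ?A = "\<lambda>n::nat. {..x - 1 / (real n + 1)}"
    have "(\<lambda>n. measure (interval_measure G) (?A n)) \<longlonglongrightarrow> measure (interval_measure G) (\<Union>n. ?A n)"
    proof (rule finite_Lim_measure_incseq)
      show "range ?A \<subseteq> sets (interval_measure G)" using CF(2) by auto
      show "incseq ?A"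
      proof (rule incseq_SucI)
        fix n :: nat
        have "1 / (real (Suc n) + 1) \<le> 1 / (real n + 1)"
          by (intro divide_left_mono) auto
        then show "?A n \<subseteq> ?A (Suc n)" by auto
      qed
    qed
    moreover have "(\<Union>n. ?A n) = {..<x}"
    proof (auto)
      fix y assume "y < x"
      then obtain n :: nat where "1 / (real n + 1) < x - y"
        by (metis diff_gt_0_iff_gt nat_approx_posE of_nat_Suc add.commute)
      then show "\<exists>n. y \<le> x - 1 / (real n + 1)" by (intro exI[of _ n]) simp
    next
      fix y n assume "y \<le> x - 1 / (real n + 1)"
      moreover have "0 < 1 / (real n + 1)" by simp
      ultimately show "y < x" by linarith
    qed
    ultimately have lim: "(\<lambda>n. G (x - 1 / (real n + 1))) \<longlonglongrightarrow> measure (interval_measure G) {..<x}"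
      using CF(3) by simp
    show "measure (interval_measure G) {..<x} \<le> \<alpha>"
      by (rule LIMSEQ_le_const2[OF lim]) (auto intro!: Gle)
  }
  {
    assume "q \<le> x"
    have "\<alpha> \<le> G x"
    proof (rule ccontr)
      assume "\<not> \<alpha> \<le> G x"
      then have "G x < \<alpha>" by simp
      with rc[of x] have "eventually (\<lambda>s. G s < \<alpha>) (at_right x)"
        unfolding continuous_within by (auto dest: order_tendstoD)
      then obtain bb where bb: "bb > x" "\<And>s. x < s \<Longrightarrow> s < bb \<Longrightarrow> G s < \<alpha>"
        unfolding eventually_at_right[OF less_add_one[of x]] by auto
      define s where "s = (x + bb) / 2"
      have "G s < \<alpha>" using bb by (intro bb(2)) (auto simp: s_def)
      then have "s \<le> Sup {s. G s < \<alpha>}" using bdd2 by (intro cSup_upper) auto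
      also have "\<dots> \<le> x" using q \<open>q \<le> x\<close> unfolding is_quantile_def by linarith
      finally show False using bb by (simp add: s_def)
    qed
    have "{x<..} = space (interval_measure G) - {..x}" using CF(2) sets_eq_imp_space_eq[OF CF(2)] by auto
    then have "measure (interval_measure G) {x<..} = 1 - G x"
      using prob_compl[of "{..x}"] CF by simp
    then show "measure (interval_measure G) {x<..} \<le> 1 - \<alpha>" using \<open>\<alpha> \<le> G x\<close> by simp
  }
qed



lemma S_nonneg:
  fixes g :: "real \<Rightarrow> real"
  assumes g: "mono g" and a: "0 \<le> \<alpha>" "\<alpha> \<le> 1"
  shows "0 \<le> ((if y < x then 1 else 0) - \<alpha>) * (g x - g y)"
proof (cases "y < x")
  case True
  then have "g y \<le> g x" using monoD[OF g] by auto
  then show ?thesis using True a by simp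
next
  case False
  then have "g x \<le> g y" using monoD[OF g] by auto
  then show ?thesis using False a by (simp add: mult_nonneg_nonpos)
qed

lemma Q_pt1:
  fixes g :: "real \<Rightarrow> real"
  assumes g: "mono g" and x: "x2 \<le> x1"
  shows "((if y < x1 then 1 else 0) - \<alpha>) * (g x1 - g y) + \<alpha> * (g x1 - g x2)
     \<le> ((if y < x2 then 1 else 0) - \<alpha>) * (g x2 - g y) + indicator {..<x1} y * (g x1 - g x2)"
proof -
  consider "y < x2" | "x2 \<le> y" "y < x1" | "x1 \<le> y" by linarith
  then show ?thesis
  proof cases
    case 1 then show ?thesis using x by (simp add: algebra_simps)
  next
    case 2
    then have "g x2 \<le> g y" using monoD[OF g] by auto
    then show ?thesis using 2 by (simp add: algebra_simps)
  next
    case 3 then show ?thesis using x by (simp add: algebra_simps)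
  qed
qed

lemma Q_pt2:
  fixes g :: "real \<Rightarrow> real"
  assumes g: "mono g" and x: "x1 \<le> x2"
  shows "((if y < x1 then 1 else 0) - \<alpha>) * (g x1 - g y) + (1 - \<alpha>) * (g x2 - g x1)
     \<le> ((if y < x2 then 1 else 0) - \<alpha>) * (g x2 - g y) + indicator {x1<..} y * (g x2 - g x1)"
proof -
  consider "y < x1" | "y = x1" | "x1 < y" "y < x2" | "x2 \<le> y" "x1 < y" | "x2 \<le> y" "y \<le> x1" by linarith
  then show ?thesis
  proof cases
    case 1 then show ?thesis using x by (simp add: algebra_simps)
  next
    case 2 then show ?thesis using x by (auto simp: algebra_simps)
  next
    case 3
    then have "g y \<le> g x2" using monoD[OF g] by auto
    then show ?thesis using 3 by (simp add: algebra_simps)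
  next
    case 4 then show ?thesis using x by (simp add: algebra_simps)
  next
    case 5 then have "x1 = x2" "y = x1" using x by auto
    then show ?thesis by simp
  qed
qed

lemma quantile_pointwise:
  fixes g :: "real \<Rightarrow> real"
  assumes G: "is_CDF G" and a: "0 < \<alpha>" "\<alpha> < 1" and q: "is_quantile \<alpha> G q" and g: "mono g"
    and ord: "(x2 \<le> x1 \<and> x1 \<le> q) \<or> (q \<le> x1 \<and> x1 \<le> x2)"
  shows "(\<integral>\<^sup>+y. ennreal (((if y < x1 then 1 else 0) - \<alpha>) * (g x1 - g y)) \<partial>interval_measure G)
       \<le> (\<integral>\<^sup>+y. ennreal (((if y < x2 then 1 else 0) - \<alpha>) * (g x2 - g y)) \<partial>interval_measure G)"
proof -
  note CF = CDF_facts[OF G]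
  interpret prob_space "interval_measure G" by (rule CF(1))
  have pU: "prob UNIV = 1" using prob_space sets_eq_imp_space_eq[OF CF(2)] by simp
  have ind: "integrable (interval_measure G) (indicat_real A)" if "A \<in> sets borel" for A
    using that CF(2) by (intro integrable_real_indicator) (auto simp: less_top[symmetric])
  have ind1: "integrable (interval_measure G) (indicat_real {..<x1})"
   and ind2: "integrable (interval_measure G) (indicat_real {x1<..})" by (auto intro!: ind)
  have gm[measurable]: "g \<in> borel_measurable borel" using g by (rule borel_measurable_mono)
  have meas: "(\<lambda>y. ((if y < x then 1 else 0) - \<alpha>) * (g x - g y)) \<in> borel_measurable (interval_measure G)" for x
    using CF(2) by (simp add: measurable_cong_sets[OF CF(2) refl])
  have nn: "0 \<le> ((if y < x then 1 else 0) - \<alpha>) * (g x - g y)" for x y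
    using S_nonneg[OF g] a by simp
  from ord show ?thesis
  proof
    assume o: "x2 \<le> x1 \<and> x1 \<le> q"
    have d: "0 \<le> g x1 - g x2" using monoD[OF g] o by auto
    show ?thesis
    proof (rule cancel_lemma[where ha = "\<lambda>y. \<alpha> * (g x1 - g x2)"
          and hb = "\<lambda>y. indicator {..<x1} y * (g x1 - g x2)"])
      show "finite_measure (interval_measure G)" by unfold_locales
      have "measure (interval_measure G) {..<x1} * (g x1 - g x2) \<le> \<alpha> * (g x1 - g x2)"
        using quantile_facts(1)[OF G a q, of x1] o d by (intro mult_right_mono) auto
      then show "integral\<^sup>L (interval_measure G) (\<lambda>y. indicator {..<x1} y * (g x1 - g x2))
          \<le> integral\<^sup>L (interval_measure G) (\<lambda>y. \<alpha> * (g x1 - g x2))"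
        using CF(2) pU by simp
    qed (use meas nn d a CF(2) ind1 ind2 Q_pt1[OF g] o in auto)
  next
    assume o: "q \<le> x1 \<and> x1 \<le> x2"
    have d: "0 \<le> g x2 - g x1" using monoD[OF g] o by auto
    show ?thesis
    proof (rule cancel_lemma[where ha = "\<lambda>y. (1 - \<alpha>) * (g x2 - g x1)"
          and hb = "\<lambda>y. indicator {x1<..} y * (g x2 - g x1)"])
      show "finite_measure (interval_measure G)" by unfold_locales
      have "measure (interval_measure G) {x1<..} * (g x2 - g x1) \<le> (1 - \<alpha>) * (g x2 - g x1)"
        using quantile_facts(2)[OF G a q, of x1] o d by (intro mult_right_mono) auto
      then show "integral\<^sup>L (interval_measure G) (\<lambda>y. indicator {x1<..} y * (g x2 - g x1))
          \<le> integral\<^sup>L (interval_measure G) (\<lambda>y. (1 - \<alpha>) * (g x2 - g x1))"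
        using CF(2) pU by simp
    qed (use meas nn d a CF(2) ind1 ind2 Q_pt2[OF g] o in auto)
  qed
qed


lemma slope_mono:
  fixes f :: "real \<Rightarrow> real"
  assumes f: "convex_on UNIV f" and "a < b" "b < c"
  shows "(f b - f a) / (b - a) \<le> (f c - f b) / (c - b)"
proof -
  have 1: "(f a - f b) / (a - b) \<le> (f a - f c) / (a - c)"
   and 2: "(f a - f c) / (a - c) \<le> (f b - f c) / (b - c)"
    using convex_on_slope_le[OF f _ _ assms(2,3)] by auto
  have "(f b - f a) / (b - a) = (f a - f b) / (a - b)"
    by (metis minus_diff_eq minus_divide_divide)
  moreover have "(f c - f b) / (c - b) = (f b - f c) / (b - c)"
    by (metis minus_diff_eq minus_divide_divide)
  ultimately show ?thesis using 1 2 by linarith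
qed

lemma slope_mono2:
  fixes f :: "real \<Rightarrow> real"
  assumes f: "convex_on UNIV f" and "a < b" "b < c"
  shows "(f c - f a) / (c - a) \<le> (f c - f b) / (c - b)"
proof -
  have 2: "(f a - f c) / (a - c) \<le> (f b - f c) / (b - c)"
    using convex_on_slope_le[OF f _ _ assms(2,3)] by auto
  have "(f c - f a) / (c - a) = (f a - f c) / (a - c)"
    by (metis minus_diff_eq minus_divide_divide)
  moreover have "(f c - f b) / (c - b) = (f b - f c) / (b - c)"
    by (metis minus_diff_eq minus_divide_divide)
  ultimately show ?thesis using 2 by linarith
qed

lemma left_deriv_eq:
  fixes \<phi> :: "real \<Rightarrow> real" and x :: real
  assumes cv: "convex_on UNIV \<phi>"
  defines "D \<equiv> Sup ((\<lambda>z. (\<phi> z - \<phi> x) / (z - x)) ` {..<x})"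
  shows "left_deriv \<phi> x = D"
    and "\<And>w. w < x \<Longrightarrow> (\<phi> w - \<phi> x) / (w - x) \<le> D"
    and "\<And>w. x < w \<Longrightarrow> D \<le> (\<phi> w - \<phi> x) / (w - x)"
proof -
  let ?q = "\<lambda>z. (\<phi> z - \<phi> x) / (z - x)"
  have ne: "?q ` {..<x} \<noteq> {}" by auto
  have ub: "?q w \<le> ?q (x+1)" if "w < x" for w
  proof -
    have "?q w = (\<phi> x - \<phi> w) / (x - w)"
      by (metis minus_diff_eq minus_divide_divide)
    also have "\<dots> \<le> (\<phi> (x+1) - \<phi> x) / ((x+1) - x)"
      by (rule slope_mono[OF cv that]) simp
    finally show ?thesis by simp
  qed
  have bdd: "bdd_above (?q ` {..<x})"
    using ub by (auto intro!: bdd_aboveI2)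
  show le: "\<And>w. w < x \<Longrightarrow> ?q w \<le> D"
    unfolding D_def using bdd by (auto intro!: cSup_upper)
  show ge: "\<And>w. x < w \<Longrightarrow> D \<le> ?q w"
  proof -
    fix w assume "x < w"
    show "D \<le> ?q w" unfolding D_def
    proof (rule cSup_least[OF ne])
      fix v assume "v \<in> ?q ` {..<x}"
      then obtain z where z: "z < x" "v = ?q z" by auto
      have "?q z = (\<phi> x - \<phi> z) / (x - z)"
        by (metis minus_diff_eq minus_divide_divide)
      also have "\<dots> \<le> ?q w"
        by (rule slope_mono[OF cv z(1) \<open>x < w\<close>])
      finally show "v \<le> ?q w" using z by simp
    qed
  qed
  have "(?q \<longlongrightarrow> D) (at_left x)"
  proof (rule order_tendstoI)
    fix a assume "a < D"
    then obtain z0 where z0: "z0 < x" "a < ?q z0"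
      using less_cSup_iff[OF ne bdd] unfolding D_def by auto
    have "eventually (\<lambda>z. z \<in> {z0<..<x}) (at_left x)"
      using eventually_at_left_real[OF z0(1)] .
    then show "eventually (\<lambda>z. a < ?q z) (at_left x)"
    proof (rule eventually_mono)
      fix z assume "z \<in> {z0<..<x}"
      then have "?q z0 \<le> ?q z"
      proof -
        have e1: "?q z0 = (\<phi> x - \<phi> z0) / (x - z0)"
          by (metis minus_diff_eq minus_divide_divide)
        have e2: "?q z = (\<phi> x - \<phi> z) / (x - z)"
          by (metis minus_diff_eq minus_divide_divide)
        assume "z \<in> {z0<..<x}"
        then show ?thesis unfolding e1 e2 using slope_mono2[OF cv, of z0 z x] by simp
      qed
      then show "a < ?q z" using z0 by simp
    qed
  next
    fix a assume "D < a"
    have "eventually (\<lambda>z. z \<in> {x-1<..<x}) (at_left x)"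
      by (rule eventually_at_left_real) simp
    then show "eventually (\<lambda>z. ?q z < a) (at_left x)"
      by (rule eventually_mono) (use le \<open>D < a\<close> in fastforce)
  qed
  then show "left_deriv \<phi> x = D"
    unfolding left_deriv_def by (intro tendsto_Lim) (auto simp: trivial_limit_at_left_real)
qed

lemma left_deriv_subgrad:
  fixes \<phi> :: "real \<Rightarrow> real"
  assumes cv: "convex_on UNIV \<phi>"
  shows "\<phi> x + left_deriv \<phi> x * (z - x) \<le> \<phi> z"
proof -
  note L = left_deriv_eq[OF cv, where x=x]
  consider "z < x" | "z = x" | "x < z" by linarith
  then show ?thesis
  proof cases
    case 1
    with L(2)[OF 1] have "(\<phi> z - \<phi> x) / (z - x) \<le> left_deriv \<phi> x" by (simp add: L(1))
    with 1 show ?thesis by (simp add: divide_le_eq algebra_simps)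
  next
    case 3
    with L(3)[OF 3] have "left_deriv \<phi> x \<le> (\<phi> z - \<phi> x) / (z - x)" by (simp add: L(1))
    with 3 show ?thesis by (simp add: le_divide_eq algebra_simps)
  qed simp
qed

lemma left_deriv_mono:
  fixes \<phi> :: "real \<Rightarrow> real"
  assumes cv: "convex_on UNIV \<phi>" and "x \<le> y"
  shows "left_deriv \<phi> x \<le> left_deriv \<phi> y"
proof (cases "x = y")
  case False
  then have xy: "x < y" using assms by simp
  have "left_deriv \<phi> x \<le> (\<phi> y - \<phi> x) / (y - x)"
    using left_deriv_eq(3)[OF cv xy] left_deriv_eq(1)[OF cv, where x=x] by simp
  also have "\<dots> = (\<phi> x - \<phi> y) / (x - y)"
    by (metis minus_diff_eq minus_divide_divide)
  also have "\<dots> \<le> left_deriv \<phi> y"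
    using left_deriv_eq(2)[OF cv xy] left_deriv_eq(1)[OF cv, where x=y] by simp
  finally show ?thesis .
qed simp


lemma E_pt1:
  fixes \<phi> :: "real \<Rightarrow> real"
  assumes cv: "convex_on UNIV \<phi>" and a: "0 < \<alpha>" "\<alpha> < 1" and x: "x2 \<le> x1"
  defines "k \<equiv> left_deriv \<phi> x1 - left_deriv \<phi> x2"
  shows "\<bar>(if y < x1 then 1 else 0) - \<alpha>\<bar> * (\<phi> y - \<phi> x1 - left_deriv \<phi> x1 * (y - x1))
           + k * \<alpha> * max (y - x1) 0
       \<le> \<bar>(if y < x2 then 1 else 0) - \<alpha>\<bar> * (\<phi> y - \<phi> x2 - left_deriv \<phi> x2 * (y - x2))
           + k * (1 - \<alpha>) * max (x1 - y) 0"
proof -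
  define p1 where "p1 = left_deriv \<phi> x1"
  define p2 where "p2 = left_deriv \<phi> x2"
  define B1 where "B1 = \<phi> y - \<phi> x1 - p1 * (y - x1)"
  define B2 where "B2 = \<phi> y - \<phi> x2 - p2 * (y - x2)"
  have A: "\<phi> x2 + p2 * (x1 - x2) \<le> \<phi> x1" unfolding p2_def by (rule left_deriv_subgrad[OF cv])
  have B1n: "0 \<le> B1" unfolding B1_def p1_def using left_deriv_subgrad[OF cv, of x1 y] by simp
  have B2n: "0 \<le> B2" unfolding B2_def p2_def using left_deriv_subgrad[OF cv, of x2 y] by simp
  have kk: "k = p1 - p2" unfolding k_def p1_def p2_def ..
  have k0: "0 \<le> k" unfolding k_def using left_deriv_mono[OF cv x] by simp
  consider "y < x2" | "x2 \<le> y" "y < x1" | "x1 \<le> y" by linarith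
  then show ?thesis
  proof cases
    case 1
    have "B1 \<le> B2 + k * (x1 - y)" using A unfolding B1_def B2_def kk by (simp add: algebra_simps)
    then have "(1 - \<alpha>) * B1 \<le> (1 - \<alpha>) * (B2 + k * (x1 - y))" using a by (intro mult_left_mono) auto
    then show ?thesis using 1 x a unfolding B1_def B2_def p1_def p2_def
      by (simp add: algebra_simps)
  next
    case 2
    have "p2 * (x1 - y) \<le> left_deriv \<phi> y * (x1 - y)"
      using left_deriv_mono[OF cv 2(1)] 2 unfolding p2_def by (intro mult_right_mono) auto
    moreover have "\<phi> y + left_deriv \<phi> y * (x1 - y) \<le> \<phi> x1" by (rule left_deriv_subgrad[OF cv])
    ultimately have "B1 \<le> k * (x1 - y)" unfolding B1_def kk by (simp add: algebra_simps)
    then have "(1 - \<alpha>) * B1 \<le> (1 - \<alpha>) * (k * (x1 - y))" using a by (intro mult_left_mono) auto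
    moreover have "0 \<le> \<alpha> * B2" using a B2n by simp
    ultimately show ?thesis using 2 x a unfolding B1_def B2_def p1_def p2_def
      by (simp add: algebra_simps)
  next
    case 3
    have "B1 + k * (y - x1) \<le> B2" using A unfolding B1_def B2_def kk by (simp add: algebra_simps)
    then have "\<alpha> * (B1 + k * (y - x1)) \<le> \<alpha> * B2" using a by (intro mult_left_mono) auto
    then show ?thesis using 3 x a unfolding B1_def B2_def p1_def p2_def
      by (simp add: algebra_simps)
  qed
qed

lemma E_pt2:
  fixes \<phi> :: "real \<Rightarrow> real"
  assumes cv: "convex_on UNIV \<phi>" and a: "0 < \<alpha>" "\<alpha> < 1" and x: "x1 \<le> x2"
  defines "k \<equiv> left_deriv \<phi> x2 - left_deriv \<phi> x1"
  shows "\<bar>(if y < x1 then 1 else 0) - \<alpha>\<bar> * (\<phi> y - \<phi> x1 - left_deriv \<phi> x1 * (y - x1))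
           + k * (1 - \<alpha>) * max (x1 - y) 0
       \<le> \<bar>(if y < x2 then 1 else 0) - \<alpha>\<bar> * (\<phi> y - \<phi> x2 - left_deriv \<phi> x2 * (y - x2))
           + k * \<alpha> * max (y - x1) 0"
proof -
  define p1 where "p1 = left_deriv \<phi> x1"
  define p2 where "p2 = left_deriv \<phi> x2"
  define B1 where "B1 = \<phi> y - \<phi> x1 - p1 * (y - x1)"
  define B2 where "B2 = \<phi> y - \<phi> x2 - p2 * (y - x2)"
  have A: "\<phi> x2 + p2 * (x1 - x2) \<le> \<phi> x1" unfolding p2_def by (rule left_deriv_subgrad[OF cv])
  have B1n: "0 \<le> B1" unfolding B1_def p1_def using left_deriv_subgrad[OF cv, of x1 y] by simp
  have B2n: "0 \<le> B2" unfolding B2_def p2_def using left_deriv_subgrad[OF cv, of x2 y] by simp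
  have kk: "k = p2 - p1" unfolding k_def p1_def p2_def ..
  consider "y < x1" | "x1 \<le> y" "y < x2" | "x2 \<le> y" by linarith
  then show ?thesis
  proof cases
    case 1
    have "B1 + k * (x1 - y) \<le> B2" using A unfolding B1_def B2_def kk by (simp add: algebra_simps)
    then have "(1 - \<alpha>) * (B1 + k * (x1 - y)) \<le> (1 - \<alpha>) * B2" using a by (intro mult_left_mono) auto
    then show ?thesis using 1 x a unfolding B1_def B2_def p1_def p2_def
      by (simp add: algebra_simps)
  next
    case 2
    have "left_deriv \<phi> y * (x1 - y) \<ge> p2 * (x1 - y)"
      using left_deriv_mono[OF cv, of y x2] 2 unfolding p2_def by (intro mult_right_mono_neg) auto
    moreover have "\<phi> y + left_deriv \<phi> y * (x1 - y) \<le> \<phi> x1" by (rule left_deriv_subgrad[OF cv])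
    ultimately have "B1 \<le> k * (y - x1)" unfolding B1_def kk by (simp add: algebra_simps)
    then have "\<alpha> * B1 \<le> \<alpha> * (k * (y - x1))" using a by (intro mult_left_mono) auto
    moreover have "0 \<le> (1 - \<alpha>) * B2" using a B2n by simp
    ultimately show ?thesis using 2 x a unfolding B1_def B2_def p1_def p2_def
      by (simp add: algebra_simps)
  next
    case 3
    have "B1 \<le> B2 + k * (y - x1)" using A unfolding B1_def B2_def kk by (simp add: algebra_simps)
    then have "\<alpha> * B1 \<le> \<alpha> * (B2 + k * (y - x1))" using a by (intro mult_left_mono) auto
    then show ?thesis using 3 x a unfolding B1_def B2_def p1_def p2_def
      by (simp add: algebra_simps)
  qed
qed



lemma expectile_facts:
  assumes G: "is_CDF G" and a: "0 < \<alpha>" "\<alpha> < 1" and t: "is_expectile \<alpha> G t"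
  shows "x \<le> t \<Longrightarrow> (1 - \<alpha>) * integral\<^sup>L (interval_measure G) (\<lambda>y. max (x - y) 0)
            \<le> \<alpha> * integral\<^sup>L (interval_measure G) (\<lambda>y. max (y - x) 0)"
    and "t \<le> x \<Longrightarrow> \<alpha> * integral\<^sup>L (interval_measure G) (\<lambda>y. max (y - x) 0)
            \<le> (1 - \<alpha>) * integral\<^sup>L (interval_measure G) (\<lambda>y. max (x - y) 0)"
    and "integrable (interval_measure G) (\<lambda>y. max (x - y) 0)"
    and "integrable (interval_measure G) (\<lambda>y. max (y - x) 0)"
proof -
  note CF = CDF_facts[OF G]
  interpret prob_space "interval_measure G" by (rule CF(1))
  have iy: "integrable (interval_measure G) (\<lambda>y. y)" using t unfolding is_expectile_def by simp
  have i1: "integrable (interval_measure G) (\<lambda>y. max (z - y) 0)" for z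
    using iy by (intro integrable_max Bochner_Integration.integrable_diff) auto
  have i2: "integrable (interval_measure G) (\<lambda>y. max (y - z) 0)" for z
    using iy by (intro integrable_max Bochner_Integration.integrable_diff) auto
  show "integrable (interval_measure G) (\<lambda>y. max (x - y) 0)"
       "integrable (interval_measure G) (\<lambda>y. max (y - x) 0)" using i1 i2 by auto
  have eq1: "(LINT y:{..t}|interval_measure G. t - y) = integral\<^sup>L (interval_measure G) (\<lambda>y. max (t - y) 0)"
    unfolding set_lebesgue_integral_def by (intro Bochner_Integration.integral_cong) (auto simp: indicator_def)
  have eq2: "(LINT y:{t<..}|interval_measure G. y - t) = integral\<^sup>L (interval_measure G) (\<lambda>y. max (y - t) 0)"
    unfolding set_lebesgue_integral_def by (intro Bochner_Integration.integral_cong) (auto simp: indicator_def)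
  have E: "(1 - \<alpha>) * integral\<^sup>L (interval_measure G) (\<lambda>y. max (t - y) 0)
      = \<alpha> * integral\<^sup>L (interval_measure G) (\<lambda>y. max (y - t) 0)"
    using t unfolding is_expectile_def eq1 eq2 by simp
  {
    assume "x \<le> t"
    have "integral\<^sup>L (interval_measure G) (\<lambda>y. max (x - y) 0) \<le> integral\<^sup>L (interval_measure G) (\<lambda>y. max (t - y) 0)"
      using i1 \<open>x \<le> t\<close> by (intro integral_mono) auto
    moreover have "integral\<^sup>L (interval_measure G) (\<lambda>y. max (y - t) 0) \<le> integral\<^sup>L (interval_measure G) (\<lambda>y. max (y - x) 0)"
      using i2 \<open>x \<le> t\<close> by (intro integral_mono) auto
    ultimately show "(1 - \<alpha>) * integral\<^sup>L (interval_measure G) (\<lambda>y. max (x - y) 0)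
            \<le> \<alpha> * integral\<^sup>L (interval_measure G) (\<lambda>y. max (y - x) 0)"
      using E a by (smt (verit) mult_left_mono)
  }
  {
    assume "t \<le> x"
    have "integral\<^sup>L (interval_measure G) (\<lambda>y. max (t - y) 0) \<le> integral\<^sup>L (interval_measure G) (\<lambda>y. max (x - y) 0)"
      using i1 \<open>t \<le> x\<close> by (intro integral_mono) auto
    moreover have "integral\<^sup>L (interval_measure G) (\<lambda>y. max (y - x) 0) \<le> integral\<^sup>L (interval_measure G) (\<lambda>y. max (y - t) 0)"
      using i2 \<open>t \<le> x\<close> by (intro integral_mono) auto
    ultimately show "\<alpha> * integral\<^sup>L (interval_measure G) (\<lambda>y. max (y - x) 0)
            \<le> (1 - \<alpha>) * integral\<^sup>L (interval_measure G) (\<lambda>y. max (x - y) 0)"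
      using E a by (smt (verit) mult_left_mono)
  }
qed

lemma SE_nonneg:
  fixes \<phi> :: "real \<Rightarrow> real"
  assumes cv: "convex_on UNIV \<phi>"
  shows "0 \<le> \<bar>(if y < x then 1 else 0) - \<alpha>\<bar> * (\<phi> y - \<phi> x - left_deriv \<phi> x * (y - x))"
  using left_deriv_subgrad[OF cv, of x y] by simp

lemma expectile_pointwise:
  fixes \<phi> :: "real \<Rightarrow> real"
  assumes G: "is_CDF G" and a: "0 < \<alpha>" "\<alpha> < 1" and t: "is_expectile \<alpha> G t" and cv: "convex_on UNIV \<phi>"
    and ord: "(x2 \<le> x1 \<and> x1 \<le> t) \<or> (t \<le> x1 \<and> x1 \<le> x2)"
  shows "(\<integral>\<^sup>+y. ennreal (\<bar>(if y < x1 then 1 else 0) - \<alpha>\<bar> * (\<phi> y - \<phi> x1 - left_deriv \<phi> x1 * (y - x1))) \<partial>interval_measure G)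
       \<le> (\<integral>\<^sup>+y. ennreal (\<bar>(if y < x2 then 1 else 0) - \<alpha>\<bar> * (\<phi> y - \<phi> x2 - left_deriv \<phi> x2 * (y - x2))) \<partial>interval_measure G)"
proof -
  note CF = CDF_facts[OF G]
  interpret prob_space "interval_measure G" by (rule CF(1))
  have pm[measurable]: "\<phi> \<in> borel_measurable borel"
    using convex_on_continuous[OF open_UNIV cv] by (rule borel_measurable_continuous_onI)
  have meas: "(\<lambda>y. \<bar>(if y < x then 1 else 0) - \<alpha>\<bar> * (\<phi> y - \<phi> x - left_deriv \<phi> x * (y - x))) \<in> borel_measurable (interval_measure G)" for x
    by (simp add: measurable_cong_sets[OF CF(2) refl])
  note nn = SE_nonneg[OF cv]
  note EF = expectile_facts[OF G a t]
  from ord show ?thesis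
  proof
    assume o: "x2 \<le> x1 \<and> x1 \<le> t"
    define k where "k = left_deriv \<phi> x1 - left_deriv \<phi> x2"
    have k0: "0 \<le> k" unfolding k_def using left_deriv_mono[OF cv, of x2 x1] o by simp
    show ?thesis
    proof (rule cancel_lemma[where ha = "\<lambda>y. k * \<alpha> * max (y - x1) 0"
          and hb = "\<lambda>y. k * (1 - \<alpha>) * max (x1 - y) 0"])
      show "finite_measure (interval_measure G)" by unfold_locales
      have "k * ((1 - \<alpha>) * integral\<^sup>L (interval_measure G) (\<lambda>y. max (x1 - y) 0))
          \<le> k * (\<alpha> * integral\<^sup>L (interval_measure G) (\<lambda>y. max (y - x1) 0))"
        using EF(1)[of x1] o k0 by (intro mult_left_mono) auto
      then show "integral\<^sup>L (interval_measure G) (\<lambda>y. k * (1 - \<alpha>) * max (x1 - y) 0)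
          \<le> integral\<^sup>L (interval_measure G) (\<lambda>y. k * \<alpha> * max (y - x1) 0)"
        by (simp add: mult.assoc)
      show "\<And>y. y \<in> space (interval_measure G) \<Longrightarrow>
         \<bar>(if y < x1 then 1 else 0) - \<alpha>\<bar> * (\<phi> y - \<phi> x1 - left_deriv \<phi> x1 * (y - x1)) + k * \<alpha> * max (y - x1) 0
         \<le> \<bar>(if y < x2 then 1 else 0) - \<alpha>\<bar> * (\<phi> y - \<phi> x2 - left_deriv \<phi> x2 * (y - x2)) + k * (1 - \<alpha>) * max (x1 - y) 0"
        unfolding k_def using E_pt1[OF cv a] o by blast
    qed (use meas nn k0 a EF(3,4) in \<open>auto intro!: mult_nonneg_nonneg\<close>)
  next
    assume o: "t \<le> x1 \<and> x1 \<le> x2"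
    define k where "k = left_deriv \<phi> x2 - left_deriv \<phi> x1"
    have k0: "0 \<le> k" unfolding k_def using left_deriv_mono[OF cv, of x1 x2] o by simp
    show ?thesis
    proof (rule cancel_lemma[where ha = "\<lambda>y. k * (1 - \<alpha>) * max (x1 - y) 0"
          and hb = "\<lambda>y. k * \<alpha> * max (y - x1) 0"])
      show "finite_measure (interval_measure G)" by unfold_locales
      have "k * (\<alpha> * integral\<^sup>L (interval_measure G) (\<lambda>y. max (y - x1) 0))
          \<le> k * ((1 - \<alpha>) * integral\<^sup>L (interval_measure G) (\<lambda>y. max (x1 - y) 0))"
        using EF(2)[of x1] o k0 by (intro mult_left_mono) auto
      then show "integral\<^sup>L (interval_measure G) (\<lambda>y. k * \<alpha> * max (y - x1) 0)
          \<le> integral\<^sup>L (interval_measure G) (\<lambda>y. k * (1 - \<alpha>) * max (x1 - y) 0)"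
        by (simp add: mult.assoc)
      show "\<And>y. y \<in> space (interval_measure G) \<Longrightarrow>
         \<bar>(if y < x1 then 1 else 0) - \<alpha>\<bar> * (\<phi> y - \<phi> x1 - left_deriv \<phi> x1 * (y - x1)) + k * (1 - \<alpha>) * max (x1 - y) 0
         \<le> \<bar>(if y < x2 then 1 else 0) - \<alpha>\<bar> * (\<phi> y - \<phi> x2 - left_deriv \<phi> x2 * (y - x2)) + k * \<alpha> * max (y - x1) 0"
        unfolding k_def using E_pt2[OF cv a] o by blast
    qed (use meas nn k0 a EF(3,4) in \<open>auto intro!: mult_nonneg_nonneg\<close>)
  qed
qed



lemma pair_meas:
  assumes "X \<in> borel_measurable M" "Y \<in> borel_measurable M"
  shows "(\<lambda>\<omega>. (X \<omega>, Y \<omega>) :: real \<times> real) \<in> borel_measurable M"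
proof -
  have "(\<lambda>\<omega>. (X \<omega>, Y \<omega>)) \<in> M \<rightarrow>\<^sub>M (borel \<Otimes>\<^sub>M borel)"
    using assms by (intro measurable_Pair)
  then show ?thesis by (simp add: borel_prod)
qed

lemma disintegration:
  fixes M A :: "'a measure" and Y X :: "'a \<Rightarrow> real" and F :: "'a \<Rightarrow> real \<Rightarrow> real"
    and h :: "real \<times> real \<Rightarrow> ennreal"
  assumes P: "prob_space M" and sub: "subalgebra M A" and Y: "Y \<in> borel_measurable M"
    and I: "ideal_forecast M A Y F" and X: "X \<in> borel_measurable A"
    and h: "h \<in> borel_measurable borel"
  shows "(\<integral>\<^sup>+\<omega>. h (X \<omega>, Y \<omega>) \<partial>M) = (\<integral>\<^sup>+\<omega>. (\<integral>\<^sup>+y. h (X \<omega>, y) \<partial>interval_measure (F \<omega>)) \<partial>M)"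
proof -
  interpret prob_space M by (rule P)
  have spA: "space A = space M" and setsA: "sets A \<subseteq> sets M" using sub unfolding subalgebra_def by auto
  have cdf: "\<And>\<omega>. \<omega> \<in> space M \<Longrightarrow> is_CDF (F \<omega>)"
    and Fm: "\<And>t. (\<lambda>\<omega>. F \<omega> t) \<in> borel_measurable A"
    and Feq: "\<And>B t. B \<in> sets A \<Longrightarrow> measure M (B \<inter> {\<omega>\<in>space M. Y \<omega> \<le> t}) = (LINT \<omega>:B|M. F \<omega> t)"
    using I unfolding ideal_forecast_def by auto
  define K where "K \<omega> = interval_measure (F \<omega>)" for \<omega>
  have XM: "X \<in> borel_measurable M" using measurable_from_subalg[OF sub X] .
  have sK: "sets (K \<omega>) = sets borel" for \<omega> unfolding K_def by simp
  have spK: "space (K \<omega>) = UNIV" for \<omega> using sets_eq_imp_space_eq[OF sK[of \<omega>]] by simp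
  have KA: "K \<in> A \<rightarrow>\<^sub>M prob_algebra borel"
  proof (rule measurable_prob_algebra_generated[where \<Omega>=UNIV and G="range atMost"])
    show "sets (borel :: real measure) = sigma_sets UNIV (range atMost)"
      by (simp add: borel_eq_atMost)
    show "Int_stable (range atMost :: real set set)" by (auto simp: Int_stable_def)
    show "range atMost \<subseteq> Pow (UNIV :: real set)" by auto
    show "\<And>a. a \<in> space A \<Longrightarrow> prob_space (K a)"
      unfolding K_def spA using CDF_facts(1)[OF cdf] by auto
    show "\<And>a. a \<in> space A \<Longrightarrow> sets (K a) = sets borel" using sK by auto
    fix B :: "real set" assume "B \<in> range atMost"
    then obtain t where B: "B = {..t}" by auto
    have "(\<lambda>a. ennreal (F a t)) \<in> borel_measurable A" using Fm by measurable
    then show "(\<lambda>a. emeasure (K a) B) \<in> borel_measurable A"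
      by (rule measurable_cong[THEN iffD1, rotated])
         (auto simp: B K_def spA CDF_facts(4)[OF cdf])
  qed
  have KM: "K \<in> M \<rightarrow>\<^sub>M subprob_algebra borel"
    using measurable_prob_algebraD[OF measurable_from_subalg[OF sub KA]] .
  define L where "L \<omega> = distr (K \<omega>) borel (\<lambda>y. (X \<omega>, y) :: real \<times> real)" for \<omega>
  have LM: "L \<in> M \<rightarrow>\<^sub>M subprob_algebra borel"
    unfolding L_def
  proof (rule measurable_distr2[OF _ KM])
    have "(\<lambda>p. (X (fst p), snd p)) \<in> (M \<Otimes>\<^sub>M borel) \<rightarrow>\<^sub>M (borel :: (real \<times> real) measure)"
      by (rule pair_meas) (use XM in auto)
    then show "(\<lambda>(\<omega>, y). (X \<omega>, y)) \<in> (M \<Otimes>\<^sub>M borel) \<rightarrow>\<^sub>M (borel :: (real \<times> real) measure)"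
      by (simp add: case_prod_beta')
  qed
  have ne: "space M \<noteq> {}" by (rule not_empty)
  have pm: "(\<lambda>\<omega>. (X \<omega>, Y \<omega>)) \<in> borel_measurable M" by (rule pair_meas[OF XM Y])
  have Fb: "0 \<le> F \<omega> t \<and> F \<omega> t \<le> 1" if "\<omega> \<in> space M" for \<omega> t
  proof -
    interpret K: prob_space "interval_measure (F \<omega>)" using CDF_facts(1)[OF cdf[OF that]] .
    show ?thesis using CDF_facts(3)[OF cdf[OF that], of t] K.prob_le_1[of "{..t}"] measure_nonneg[of "interval_measure (F \<omega>)" "{..t}"] by auto
  qed
  have eq: "distr M borel (\<lambda>\<omega>. (X \<omega>, Y \<omega>)) = M \<bind> L"
  proof (rule measure_eqI_generator_eq[where \<Omega>=UNIV and E="range atMost"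
        and A="\<lambda>i. {..(real i, real i)}"])
    show "Int_stable (range atMost :: (real \<times> real) set set)"
    proof (rule Int_stableI)
      fix a b :: "(real \<times> real) set" assume "a \<in> range atMost" "b \<in> range atMost"
      then obtain u v where "a = {..u}" "b = {..v}" by auto
      moreover have "{..u} \<inter> {..v} = {..inf u v}" by auto
      ultimately show "a \<inter> b \<in> range atMost" by auto
    qed
    show "range atMost \<subseteq> Pow (UNIV :: (real \<times> real) set)" by auto
    show "sets (distr M borel (\<lambda>\<omega>. (X \<omega>, Y \<omega>))) = sigma_sets UNIV (range atMost)"
      by (simp add: borel_eq_atMost)
    show "sets (M \<bind> L) = sigma_sets UNIV (range atMost)"
    proof -
      have "sets (M \<bind> L) = sets (borel :: (real \<times> real) measure)"
        by (rule sets_bind[OF _ ne]) (simp add: L_def)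
      then show ?thesis by (simp add: borel_eq_atMost)
    qed
    show "range (\<lambda>i. {..(real i, real i)}) \<subseteq> range atMost" by auto
    show "(\<Union>i. {..(real i, real i)}) = UNIV"
    proof safe
      fix a b :: real
      obtain n :: nat where "max a b \<le> real n" using real_arch_simple by blast
      then show "(a, b) \<in> (\<Union>i. {..(real i, real i)})" by (auto simp: less_eq_prod_def)
    qed auto
    show "\<And>i. emeasure (distr M borel (\<lambda>\<omega>. (X \<omega>, Y \<omega>))) {..(real i, real i)} \<noteq> \<infinity>"
      by (simp add: emeasure_distr pm)
    fix Z :: "(real \<times> real) set" assume "Z \<in> range atMost"
    then obtain a b where Z: "Z = {..(a, b)}" by (auto simp: surj_pair)
    define B where "B = {\<omega>\<in>space A. X \<omega> \<le> a}"
    have BA: "B \<in> sets A" unfolding B_def using X by measurable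
    have BM: "B \<in> sets M" using BA setsA by auto
    have "emeasure (distr M borel (\<lambda>\<omega>. (X \<omega>, Y \<omega>))) Z = emeasure M (B \<inter> {\<omega>\<in>space M. Y \<omega> \<le> b})"
      using pm by (simp add: emeasure_distr Z B_def spA less_eq_prod_def) (intro arg_cong[where f="emeasure M"], auto)
    also have "\<dots> = ennreal (LINT \<omega>:B|M. F \<omega> b)"
      by (simp add: emeasure_eq_measure Feq[OF BA])
    also have "\<dots> = (\<integral>\<^sup>+\<omega>. ennreal (indicator B \<omega> * F \<omega> b) \<partial>M)"
      unfolding set_lebesgue_integral_def
    proof (simp, intro nn_integral_eq_integral[symmetric])
      have Fm': "(\<lambda>\<omega>. F \<omega> b) \<in> borel_measurable M" using measurable_from_subalg[OF sub Fm] .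
      show "integrable M (\<lambda>\<omega>. indicator B \<omega> * F \<omega> b)"
      proof (rule integrable_const_bound[where B=1])
        show "AE x in M. norm (indicator B x * F x b) \<le> 1"
          using Fb by (auto simp: indicator_def)
        show "(\<lambda>\<omega>. indicator B \<omega> * F \<omega> b) \<in> borel_measurable M" using Fm' BM by measurable
      qed
      show "AE x in M. 0 \<le> indicator B x * F x b" using Fb by auto
    qed
    also have "\<dots> = (\<integral>\<^sup>+\<omega>. emeasure (L \<omega>) Z \<partial>M)"
    proof (intro nn_integral_cong)
      fix \<omega> assume \<omega>: "\<omega> \<in> space M"
      have "emeasure (L \<omega>) Z = emeasure (K \<omega>) ((\<lambda>y. (X \<omega>, y)) -` Z \<inter> space (K \<omega>))"
        unfolding L_def by (rule emeasure_distr) (auto simp: measurable_cong_sets[OF sK refl] Z)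
      also have "(\<lambda>y. (X \<omega>, y)) -` Z \<inter> space (K \<omega>) = (if X \<omega> \<le> a then {..b} else {})"
        by (auto simp: Z spK less_eq_prod_def)
      finally show "ennreal (indicator B \<omega> * F \<omega> b) = emeasure (L \<omega>) Z"
        using \<omega> by (auto simp: B_def spA K_def CDF_facts(4)[OF cdf[OF \<omega>]] indicator_def)
    qed
    also have "\<dots> = emeasure (M \<bind> L) Z"
      by (rule emeasure_bind[OF ne LM, symmetric]) (simp add: Z)
    finally show "emeasure (distr M borel (\<lambda>\<omega>. (X \<omega>, Y \<omega>))) Z = emeasure (M \<bind> L) Z" .
  qed
  have "(\<integral>\<^sup>+\<omega>. h (X \<omega>, Y \<omega>) \<partial>M) = (\<integral>\<^sup>+z. h z \<partial>distr M borel (\<lambda>\<omega>. (X \<omega>, Y \<omega>)))"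
    by (rule nn_integral_distr[symmetric, OF pm]) (simp add: h)
  also have "\<dots> = (\<integral>\<^sup>+\<omega>. (\<integral>\<^sup>+z. h z \<partial>L \<omega>) \<partial>M)"
    unfolding eq by (rule nn_integral_bind[OF h LM])
  also have "\<dots> = (\<integral>\<^sup>+\<omega>. (\<integral>\<^sup>+y. h (X \<omega>, y) \<partial>interval_measure (F \<omega>)) \<partial>M)"
  proof (intro nn_integral_cong)
    fix \<omega> assume \<omega>: "\<omega> \<in> space M"
    show "(\<integral>\<^sup>+z. h z \<partial>L \<omega>) = (\<integral>\<^sup>+y. h (X \<omega>, y) \<partial>interval_measure (F \<omega>))"
      unfolding L_def K_def
      by (rule nn_integral_distr) (auto simp: measurable_cong_sets[OF sK[unfolded K_def] refl] h)
  qed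
  finally show ?thesis .
qed



theorem mainTheorem11:
  fixes M A :: "'a measure" and Y :: "'a \<Rightarrow> real" and F :: "'a \<Rightarrow> real \<Rightarrow> real"
    and \<alpha> :: real
  assumes "prob_space M"
    and "subalgebra M A"
    and "Y \<in> borel_measurable M"
    and "ideal_forecast M A Y F"
    and "0 < \<alpha>" and "\<alpha> < 1"
  shows "(\<forall>Q X1 X2. Q \<in> borel_measurable A \<and> X1 \<in> borel_measurable A \<and> X2 \<in> borel_measurable A
            \<and> (AE \<omega> in M. is_quantile \<alpha> (F \<omega>) (Q \<omega>))
            \<and> (AE \<omega> in M. (X2 \<omega> \<le> X1 \<omega> \<and> X1 \<omega> \<le> Q \<omega>) \<or> (Q \<omega> \<le> X1 \<omega> \<and> X1 \<omega> \<le> X2 \<omega>))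
          \<longrightarrow> (\<forall>S. scoresQ \<alpha> S \<longrightarrow>
                (\<integral>\<^sup>+\<omega>. ennreal (S (X1 \<omega>) (Y \<omega>)) \<partial>M) \<le> (\<integral>\<^sup>+\<omega>. ennreal (S (X2 \<omega>) (Y \<omega>)) \<partial>M)))
       \<and> (integrable M Y \<longrightarrow>
          (\<forall>T X1 X2. T \<in> borel_measurable A \<and> X1 \<in> borel_measurable A \<and> X2 \<in> borel_measurable A
            \<and> (AE \<omega> in M. is_expectile \<alpha> (F \<omega>) (T \<omega>))
            \<and> (AE \<omega> in M. (X2 \<omega> \<le> X1 \<omega> \<and> X1 \<omega> \<le> T \<omega>) \<or> (T \<omega> \<le> X1 \<omega> \<and> X1 \<omega> \<le> X2 \<omega>))
          \<longrightarrow> (\<forall>S. scoresE \<alpha> S \<longrightarrow>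
                (\<integral>\<^sup>+\<omega>. ennreal (S (X1 \<omega>) (Y \<omega>)) \<partial>M) \<le> (\<integral>\<^sup>+\<omega>. ennreal (S (X2 \<omega>) (Y \<omega>)) \<partial>M))))"
proof (intro conjI allI impI)
  note P = assms(1) and sub = assms(2) and Y = assms(3) and I = assms(4) and a = assms(5,6)
  interpret prob_space M by (rule P)
  have cdf: "\<And>\<omega>. \<omega> \<in> space M \<Longrightarrow> is_CDF (F \<omega>)" using I unfolding ideal_forecast_def by auto
  {
    fix Q X1 X2 :: "'a \<Rightarrow> real" and S :: "real \<Rightarrow> real \<Rightarrow> real"
    assume H: "Q \<in> borel_measurable A \<and> X1 \<in> borel_measurable A \<and> X2 \<in> borel_measurable A
            \<and> (AE \<omega> in M. is_quantile \<alpha> (F \<omega>) (Q \<omega>))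
            \<and> (AE \<omega> in M. (X2 \<omega> \<le> X1 \<omega> \<and> X1 \<omega> \<le> Q \<omega>) \<or> (Q \<omega> \<le> X1 \<omega> \<and> X1 \<omega> \<le> X2 \<omega>))"
      and sc: "scoresQ \<alpha> S"
    obtain g where g: "mono g" and S: "S = (\<lambda>x y. ((if y < x then 1 else 0) - \<alpha>) * (g x - g y))"
      using sc unfolding scoresQ_def by auto
    have gm[measurable]: "g \<in> borel_measurable borel" using g by (rule borel_measurable_mono)
    have hm: "(\<lambda>p::real \<times> real. ennreal (S (fst p) (snd p))) \<in> borel_measurable borel"
    proof -
      have "(\<lambda>p::real \<times> real. ennreal (S (fst p) (snd p))) \<in> borel_measurable (borel \<Otimes>\<^sub>M borel)"
        unfolding S by measurable
      then show ?thesis by (simp add: borel_prod)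
    qed
    have "(\<integral>\<^sup>+\<omega>. ennreal (S (X1 \<omega>) (Y \<omega>)) \<partial>M)
        = (\<integral>\<^sup>+\<omega>. (\<integral>\<^sup>+y. ennreal (S (X1 \<omega>) y) \<partial>interval_measure (F \<omega>)) \<partial>M)"
      using disintegration[OF P sub Y I _ hm, of X1] H by simp
    also have "\<dots> \<le> (\<integral>\<^sup>+\<omega>. (\<integral>\<^sup>+y. ennreal (S (X2 \<omega>) y) \<partial>interval_measure (F \<omega>)) \<partial>M)"
    proof (rule nn_integral_mono_AE)
      from H have "AE \<omega> in M. is_quantile \<alpha> (F \<omega>) (Q \<omega>) \<and>
          ((X2 \<omega> \<le> X1 \<omega> \<and> X1 \<omega> \<le> Q \<omega>) \<or> (Q \<omega> \<le> X1 \<omega> \<and> X1 \<omega> \<le> X2 \<omega>)) \<and> \<omega> \<in> space M"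
        by (auto intro: AE_space)
      then show "AE \<omega> in M. (\<integral>\<^sup>+y. ennreal (S (X1 \<omega>) y) \<partial>interval_measure (F \<omega>))
          \<le> (\<integral>\<^sup>+y. ennreal (S (X2 \<omega>) y) \<partial>interval_measure (F \<omega>))"
        by (rule eventually_mono) (auto simp: S intro!: quantile_pointwise[OF cdf a _ g])
    qed
    also have "\<dots> = (\<integral>\<^sup>+\<omega>. ennreal (S (X2 \<omega>) (Y \<omega>)) \<partial>M)"
      using disintegration[OF P sub Y I _ hm, of X2] H by simp
    finally show "(\<integral>\<^sup>+\<omega>. ennreal (S (X1 \<omega>) (Y \<omega>)) \<partial>M) \<le> (\<integral>\<^sup>+\<omega>. ennreal (S (X2 \<omega>) (Y \<omega>)) \<partial>M)" .
  }
  {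
    fix T X1 X2 :: "'a \<Rightarrow> real" and S :: "real \<Rightarrow> real \<Rightarrow> real"
    assume H: "T \<in> borel_measurable A \<and> X1 \<in> borel_measurable A \<and> X2 \<in> borel_measurable A
            \<and> (AE \<omega> in M. is_expectile \<alpha> (F \<omega>) (T \<omega>))
            \<and> (AE \<omega> in M. (X2 \<omega> \<le> X1 \<omega> \<and> X1 \<omega> \<le> T \<omega>) \<or> (T \<omega> \<le> X1 \<omega> \<and> X1 \<omega> \<le> X2 \<omega>))"
      and sc: "scoresE \<alpha> S"
    obtain \<phi> where cv: "convex_on UNIV \<phi>"
      and S: "S = (\<lambda>x y. \<bar>(if y < x then 1 else 0) - \<alpha>\<bar> * (\<phi> y - \<phi> x - left_deriv \<phi> x * (y - x)))"
      using sc unfolding scoresE_def by auto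
    have pm[measurable]: "\<phi> \<in> borel_measurable borel"
      using convex_on_continuous[OF open_UNIV cv] by (rule borel_measurable_continuous_onI)
    have lm[measurable]: "left_deriv \<phi> \<in> borel_measurable borel"
      by (rule borel_measurable_mono) (auto simp: mono_def intro: left_deriv_mono[OF cv])
    have hm: "(\<lambda>p::real \<times> real. ennreal (S (fst p) (snd p))) \<in> borel_measurable borel"
    proof -
      have "(\<lambda>p::real \<times> real. ennreal (S (fst p) (snd p))) \<in> borel_measurable (borel \<Otimes>\<^sub>M borel)"
        unfolding S by measurable
      then show ?thesis by (simp add: borel_prod)
    qed
    have "(\<integral>\<^sup>+\<omega>. ennreal (S (X1 \<omega>) (Y \<omega>)) \<partial>M)
        = (\<integral>\<^sup>+\<omega>. (\<integral>\<^sup>+y. ennreal (S (X1 \<omega>) y) \<partial>interval_measure (F \<omega>)) \<partial>M)"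
      using disintegration[OF P sub Y I _ hm, of X1] H by simp
    also have "\<dots> \<le> (\<integral>\<^sup>+\<omega>. (\<integral>\<^sup>+y. ennreal (S (X2 \<omega>) y) \<partial>interval_measure (F \<omega>)) \<partial>M)"
    proof (rule nn_integral_mono_AE)
      from H have "AE \<omega> in M. is_expectile \<alpha> (F \<omega>) (T \<omega>) \<and>
          ((X2 \<omega> \<le> X1 \<omega> \<and> X1 \<omega> \<le> T \<omega>) \<or> (T \<omega> \<le> X1 \<omega> \<and> X1 \<omega> \<le> X2 \<omega>)) \<and> \<omega> \<in> space M"
        by (auto intro: AE_space)
      then show "AE \<omega> in M. (\<integral>\<^sup>+y. ennreal (S (X1 \<omega>) y) \<partial>interval_measure (F \<omega>))
          \<le> (\<integral>\<^sup>+y. ennreal (S (X2 \<omega>) y) \<partial>interval_measure (F \<omega>))"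
        by (rule eventually_mono) (auto simp: S intro!: expectile_pointwise[OF cdf a _ cv])
    qed
    also have "\<dots> = (\<integral>\<^sup>+\<omega>. ennreal (S (X2 \<omega>) (Y \<omega>)) \<partial>M)"
      using disintegration[OF P sub Y I _ hm, of X2] H by simp
    finally show "(\<integral>\<^sup>+\<omega>. ennreal (S (X1 \<omega>) (Y \<omega>)) \<partial>M) \<le> (\<integral>\<^sup>+\<omega>. ennreal (S (X2 \<omega>) (Y \<omega>)) \<partial>M)" .
  }
qed


end
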